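(* Let $f:[0,1]\to[0,1]$ be a continuous function that does not admit a splitting sequence. If $0\le d<e\le 1$ and either $d$ and $e$ are both fixed points of $f$ or $\{d,e\}$ is a 2-cycle of $f$, then there is exactly one component $C$ of $f^{-1}((d,e))$ such that $f(C)=(d,e)$.
   Context: A 2-cycle is a set $\{s,t\}$ with $s\ne t$, $f(s)=t$, $f(t)=s$. A sequence $(T_n)_{n\in\mathbb N}$ of closed intervals $T_n\subsetneq[0,1]$ (possibly degenerate) is tight if $f(T_{n+1})=T_n$ for every $n$ and $T_n$ is nondegenerate for all sufficiently large $n$. A tight sequence $(T_n)$, $T_n=[l_n,r_n]$, is a splitting sequence admitted by $f$ if there are an infinite set $N\subseteq\mathbb N$ and nondegenerate closed intervals $S_n\subseteq[0,1]$ ($n\in N$) with $S_n\cap T_n\subseteq\{l_n,r_n\}$ and $f(S_n)=f(T_n)$ for all $n\in N$. *)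

theory Defs
  imports "HOL-Analysis.Analysis"
begin

text \<open>A closed interval T_n = [l n, r n] (possibly degenerate) is represented by its endpoints.\<close>

definition tight_seq :: "(real \<Rightarrow> real) \<Rightarrow> (nat \<Rightarrow> real) \<Rightarrow> (nat \<Rightarrow> real) \<Rightarrow> bool" where
  "tight_seq f l r \<longleftrightarrow>
     (\<forall>n. 0 \<le> l n \<and> l n \<le> r n \<and> r n \<le> 1 \<and> {l n..r n} \<noteq> {0..1}
          \<and> f ` {l (Suc n)..r (Suc n)} = {l n..r n})
     \<and> (\<exists>m. \<forall>n\<ge>m. l n < r n)"

definition splitting_seq :: "(real \<Rightarrow> real) \<Rightarrow> (nat \<Rightarrow> real) \<Rightarrow> (nat \<Rightarrow> real) \<Rightarrow> bool" where
  "splitting_seq f l r \<longleftrightarrow> tight_seq f l r \<and>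
     (\<exists>N :: nat set. infinite N \<and>
        (\<forall>n\<in>N. \<exists>a b. 0 \<le> a \<and> a < b \<and> b \<le> 1
             \<and> {a..b} \<inter> {l n..r n} \<subseteq> {l n, r n}
             \<and> f ` {a..b} = f ` {l n..r n}))"

definition admits_splitting_seq :: "(real \<Rightarrow> real) \<Rightarrow> bool" where
  "admits_splitting_seq f \<longleftrightarrow> (\<exists>l r. splitting_seq f l r)"

definition two_cycle :: "(real \<Rightarrow> real) \<Rightarrow> real \<Rightarrow> real \<Rightarrow> bool" where
  "two_cycle f s t \<longleftrightarrow> s \<noteq> t \<and> f s = t \<and> f t = s"

end

theory Submission
  imports Defs
begin

lemma L0:
  fixes f :: "real \<Rightarrow> real"
  assumes xy: "x < y" and cont: "continuous_on {x..y} f" and fx: "f x = c" and fy: "f y = c'" and cc: "c < c'"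
  shows "\<exists>a b. x \<le> a \<and> a < b \<and> b \<le> y \<and> f ` {a<..<b} = {c<..<c'} \<and> f a = c \<and> f b = c'"
proof -
  define Z where "Z = {t \<in> {x..y}. f t = c}"
  have Zc: "closed Z" unfolding Z_def by (rule continuous_closed_preimage_constant[OF cont]) auto
  have "x \<in> Z" using xy fx unfolding Z_def by auto
  moreover have "bdd_above Z" unfolding Z_def by (rule bdd_aboveI[of _ y]) auto
  ultimately have aZ: "Sup Z \<in> Z" using Zc closed_contains_Sup by blast
  define a where "a = Sup Z"
  have amax: "t \<le> a" if "t \<in> Z" for t unfolding a_def using \<open>bdd_above Z\<close> that by (simp add: cSup_upper)
  have a1: "x \<le> a" "a \<le> y" "f a = c" using aZ unfolding Z_def a_def by auto
  have "a \<noteq> y" using a1 fy cc by auto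
  with a1 have ay: "a < y" by simp
  define Z' where "Z' = {t \<in> {a..y}. f t = c'}"
  have cont2: "continuous_on {a..y} f" using a1 by (intro continuous_on_subset[OF cont]) auto
  have Zc': "closed Z'" unfolding Z'_def by (rule continuous_closed_preimage_constant[OF cont2]) auto
  have "y \<in> Z'" using ay fy unfolding Z'_def by auto
  moreover have "bdd_below Z'" unfolding Z'_def by (rule bdd_belowI[of _ a]) auto
  ultimately have bZ: "Inf Z' \<in> Z'" using Zc' closed_contains_Inf by blast
  define b where "b = Inf Z'"
  have bmin: "b \<le> t" if "t \<in> Z'" for t unfolding b_def using \<open>bdd_below Z'\<close> that by (simp add: cInf_lower)
  have b1: "a \<le> b" "b \<le> y" "f b = c'" using bZ unfolding Z'_def b_def by auto
  have "a \<noteq> b" using a1 b1 cc by auto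
  with b1 have ab: "a < b" by simp
  have inside: "c < f t \<and> f t < c'" if t: "a < t" "t < b" for t
  proof -
    have tne: "f t \<noteq> c"
    proof
      assume "f t = c"
      then have "t \<in> Z" unfolding Z_def using t a1 b1 by auto
      then show False using amax t by force
    qed
    have tne': "f t \<noteq> c'"
    proof
      assume "f t = c'"
      then have "t \<in> Z'" unfolding Z'_def using t a1 b1 by auto
      then show False using bmin t by force
    qed
    have "\<not> f t < c"
    proof
      assume lt: "f t < c"
      have "continuous_on {t..b} f" using cont by (rule continuous_on_subset) (use t a1 b1 in auto)
      then obtain s where s: "t \<le> s" "s \<le> b" "f s = c" using IVT'[of f t c b] lt b1 cc t by auto
      then have "s \<in> Z" unfolding Z_def using t a1 b1 by auto
      then show False using amax s t by force
    qed
    moreover have "\<not> f t > c'"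
    proof
      assume gt: "f t > c'"
      have "continuous_on {a..t} f" using cont by (rule continuous_on_subset) (use t a1 b1 in auto)
      then obtain s where s: "a \<le> s" "s \<le> t" "f s = c'" using IVT'[of f a c' t] gt a1 cc t by auto
      then have "s \<in> Z'" unfolding Z'_def using t a1 b1 by auto
      then show False using bmin s t by force
    qed
    ultimately show ?thesis using tne tne' by auto
  qed
  have "f ` {a<..<b} = {c<..<c'}"
  proof
    show "f ` {a<..<b} \<subseteq> {c<..<c'}" using inside by auto
    show "{c<..<c'} \<subseteq> f ` {a<..<b}"
    proof
      fix v assume v: "v \<in> {c<..<c'}"
      have "continuous_on {a..b} f" using cont by (rule continuous_on_subset) (use a1 b1 in auto)
      then obtain s where s: "a \<le> s" "s \<le> b" "f s = v" using IVT'[of f a v b] v a1 b1 ab by auto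
      then have "s \<noteq> a" "s \<noteq> b" using v a1 b1 by auto
      with s show "v \<in> f ` {a<..<b}" by force
    qed
  qed
  then show ?thesis using a1 b1 ab by blast
qed

lemma closed_img:
  fixes f :: "real \<Rightarrow> real"
  assumes "a < b" "f ` {a<..<b} = {c<..<c'}" "{f a, f b} = {c, c'}" "c < c'"
  shows "f ` {a..b} = {c..c'}"
proof -
  have "{a..b} = {a<..<b} \<union> {a, b}" using assms(1) by auto
  then have "f ` {a..b} = {c<..<c'} \<union> {f a, f b}" using assms(2) by (simp add: image_Un)
  then have "f ` {a..b} = {c<..<c'} \<union> {c, c'}" using assms(3) by simp
  also have "\<dots> = {c..c'}" using assms(4) by auto
  finally show ?thesis .
qed

lemma L1:
  fixes f :: "real \<Rightarrow> real"
  assumes ab: "a \<le> b" and cont: "continuous_on {a..b} f" and cc: "c < c'" and sub: "{c..c'} \<subseteq> f ` {a..b}"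
  shows "\<exists>a' b'. a \<le> a' \<and> a' < b' \<and> b' \<le> b \<and> f ` {a'<..<b'} = {c<..<c'} \<and> f ` {a'..b'} = {c..c'}"
proof -
  have "c \<in> f ` {a..b}" "c' \<in> f ` {a..b}" using sub cc by auto
  then obtain x y where x: "x \<in> {a..b}" "f x = c" and y: "y \<in> {a..b}" "f y = c'" by blast
  have "x \<noteq> y" using x y cc by auto
  then consider "x < y" | "y < x" by linarith
  then show ?thesis
  proof cases
    case 1
    have "continuous_on {x..y} f" using x y by (intro continuous_on_subset[OF cont]) auto
    from L0[OF 1 this x(2) y(2) cc] obtain a' b' where
      r: "x \<le> a'" "a' < b'" "b' \<le> y" "f ` {a'<..<b'} = {c<..<c'}" "f a' = c" "f b' = c'" by blast
    have "f ` {a'..b'} = {c..c'}" by (rule closed_img) (use r cc in auto)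
    then show ?thesis using r x y by (intro exI[of _ a'] exI[of _ b']) auto
  next
    case 2
    have "continuous_on {y..x} (\<lambda>t. - f t)" using x y by (intro continuous_intros continuous_on_subset[OF cont]) auto
    from L0[OF 2 this, of "-c'" "-c"] obtain a' b' where
      r: "y \<le> a'" "a' < b'" "b' \<le> x" "(\<lambda>t. - f t) ` {a'<..<b'} = {-c'<..<-c}" "- f a' = - c'" "- f b' = -c"
      using x y cc by auto
    have "f ` {a'<..<b'} = {c<..<c'}"
    proof
      show "f ` {a'<..<b'} \<subseteq> {c<..<c'}"
      proof
        fix w assume "w \<in> f ` {a'<..<b'}"
        then obtain t where "t \<in> {a'<..<b'}" "w = f t" by auto
        then have "- f t \<in> {-c'<..<-c}" using r(4) by blast
        then show "w \<in> {c<..<c'}" using \<open>w = f t\<close> by auto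
      qed
      show "{c<..<c'} \<subseteq> f ` {a'<..<b'}"
      proof
        fix v assume "v \<in> {c<..<c'}"
        then have "-v \<in> (\<lambda>t. - f t) ` {a'<..<b'}" using r(4) by auto
        then show "v \<in> f ` {a'<..<b'}" by force
      qed
    qed
    moreover have "f ` {a'..b'} = {c..c'}" by (rule closed_img) (use r cc calculation in auto)
    ultimately show ?thesis using r x y by (intro exI[of _ a'] exI[of _ b']) auto
  qed
qed

lemma pre_int:
  fixes f :: "real \<Rightarrow> real"
  assumes cont: "continuous_on {0..1} f" and "0 \<le> p" "p < q" "q \<le> 1" "f ` {p..q} = {d..e}"
    and "d \<le> a" "a < b" "b \<le> e"
  shows "\<exists>a' b'. p \<le> a' \<and> a' < b' \<and> b' \<le> q \<and> f ` {a'..b'} = {a..b}"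
proof -
  have "continuous_on {p..q} f" using assms by (intro continuous_on_subset[OF cont]) auto
  from L1[OF _ this, of a b] assms show ?thesis by fastforce
qed

lemma Split:
  fixes f :: "real \<Rightarrow> real"
  assumes cont: "continuous_on {0..1} f"
    and h1: "0 \<le> p1" "p1 < q1" "q1 \<le> 1" and h2: "0 \<le> p2" "p2 < q2" "q2 \<le> 1"
    and dis: "q1 \<le> p2 \<or> q2 \<le> p1"
    and i1: "f ` {p1..q1} = {d..e}" and i2: "f ` {p2..q2} = {d..e}" and sub: "{p1..q1} \<subseteq> {d..e}"
  shows "admits_splitting_seq f"
proof -
  have de: "d \<le> p1" "q1 \<le> e" using sub h1 by auto
  have "\<forall>ab. \<exists>ab'. (p1 \<le> fst ab \<and> fst ab < snd ab \<and> snd ab \<le> q1) \<longrightarrow>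
      (p1 \<le> fst ab' \<and> fst ab' < snd ab' \<and> snd ab' \<le> q1 \<and> f ` {fst ab'..snd ab'} = {fst ab..snd ab})"
  proof
    fix ab :: "real \<times> real"
    show "\<exists>ab'. (p1 \<le> fst ab \<and> fst ab < snd ab \<and> snd ab \<le> q1) \<longrightarrow>
      (p1 \<le> fst ab' \<and> fst ab' < snd ab' \<and> snd ab' \<le> q1 \<and> f ` {fst ab'..snd ab'} = {fst ab..snd ab})"
    proof (cases "p1 \<le> fst ab \<and> fst ab < snd ab \<and> snd ab \<le> q1")
      case True
      then obtain a' b' where "p1 \<le> a' \<and> a' < b' \<and> b' \<le> q1 \<and> f ` {a'..b'} = {fst ab..snd ab}"
        using pre_int[OF cont h1 i1, of "fst ab" "snd ab"] de by auto
      then show ?thesis by (intro exI[of _ "(a', b')"]) auto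
    qed auto
  qed
  then obtain g where g: "\<And>ab. (p1 \<le> fst ab \<and> fst ab < snd ab \<and> snd ab \<le> q1) \<Longrightarrow>
      (p1 \<le> fst (g ab) \<and> fst (g ab) < snd (g ab) \<and> snd (g ab) \<le> q1 \<and> f ` {fst (g ab)..snd (g ab)} = {fst ab..snd ab})"
    by (metis choice)
  define l where "l n = fst ((g ^^ n) (p1, q1))" for n
  define r where "r n = snd ((g ^^ n) (p1, q1))" for n
  have inv: "p1 \<le> l n \<and> l n < r n \<and> r n \<le> q1" for n
  proof (induction n)
    case 0 then show ?case using h1 by (simp add: l_def r_def)
  next
    case (Suc n) then show ?case using g[of "(g ^^ n) (p1, q1)"] by (simp add: l_def r_def)
  qed
  have img: "f ` {l (Suc n)..r (Suc n)} = {l n..r n}" for n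
    using g[of "(g ^^ n) (p1, q1)"] inv[of n] by (simp add: l_def r_def)
  have not01: "{l n..r n} \<noteq> {0..1}" for n
  proof
    assume "{l n..r n} = {0..1}"
    then have "l n = 0" "r n = 1" using inv[of n] by (simp_all add: Icc_eq_Icc)
    then show False using inv[of n] h1 h2 dis by linarith
  qed
  have tight: "tight_seq f l r"
    unfolding tight_seq_def using inv h1 img not01 by (auto intro: order_trans order_less_imp_le)
  have "\<exists>a b. 0 \<le> a \<and> a < b \<and> b \<le> 1 \<and> {a..b} \<inter> {l n..r n} \<subseteq> {l n, r n} \<and> f ` {a..b} = f ` {l n..r n}"
    if nR: "n \<in> range Suc" for n
  proof -
    obtain m where n: "n = Suc m" using nR by auto
    obtain a' b' where ab: "p2 \<le> a'" "a' < b'" "b' \<le> q2" "f ` {a'..b'} = {l m..r m}"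
      using pre_int[OF cont h2 i2, of "l m" "r m"] inv[of m] de by auto
    have "{a'..b'} \<inter> {l n..r n} \<subseteq> {l n, r n}"
    proof
      fix x assume "x \<in> {a'..b'} \<inter> {l n..r n}"
      then show "x \<in> {l n, r n}" using ab inv[of n] dis by auto
    qed
    then show ?thesis using ab img[of m] n h2 by (intro exI[of _ a'] exI[of _ b']) auto
  qed
  moreover have "infinite (range Suc)" by (simp add: range_inj_infinite)
  ultimately have "splitting_seq f l r" unfolding splitting_seq_def using tight by blast
  then show ?thesis unfolding admits_splitting_seq_def by blast
qed

lemma Comp:
  fixes f :: "real \<Rightarrow> real"
  assumes cont: "continuous_on {0..1} f" and C: "C \<in> components {x \<in> {0..1}. f x \<in> {d<..<e}}"
    and fC: "f ` C = {d<..<e}" and de: "d < e"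
  shows "\<exists>p q. 0 \<le> p \<and> p < q \<and> q \<le> 1 \<and> {p<..<q} \<subseteq> C \<and> C \<subseteq> {p..q} \<and> f ` {p..q} = {d..e}
     \<and> p = Inf C \<and> q = Sup C"
proof -
  have CU: "C \<subseteq> {0..1}" using in_components_subset[OF C] by auto
  have ne: "C \<noteq> {}" using in_components_nonempty[OF C] .
  have iv: "is_interval C" using in_components_connected[OF C] is_interval_connected_1 by blast
  define p where "p = Inf C"
  define q where "q = Sup C"
  have bb: "bdd_below C" "bdd_above C" using CU by (meson bdd_below_Icc bdd_below_mono bdd_above_Icc bdd_above_mono)+
  have Cpq: "C \<subseteq> {p..q}" using bb by (auto simp: p_def q_def intro: cInf_lower cSup_upper)
  have p0: "0 \<le> p" unfolding p_def using ne CU by (intro cInf_greatest) auto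
  have q1: "q \<le> 1" unfolding q_def using ne CU by (intro cSup_least) auto
  have pq: "p < q"
  proof (rule ccontr)
    assume "\<not> p < q"
    then have "C \<subseteq> {p}" using Cpq by auto
    then have "f ` C \<subseteq> {f p}" by auto
    moreover have "(d+e)/2 \<in> f ` C" "(d+3*e)/4 \<in> f ` C" using fC de by auto
    ultimately have "(d+e)/2 = f p" "(d+3*e)/4 = f p" by blast+
    then have "(d+e)/2 = (d+3*e)/4" by simp
    then show False using de by (simp add: field_simps)
  qed
  have open_sub: "{p<..<q} \<subseteq> C"
  proof
    fix x assume x: "x \<in> {p<..<q}"
    obtain c1 where c1: "c1 \<in> C" "c1 < x" using x ne bb by (auto simp: p_def cInf_less_iff)
    obtain c2 where c2: "c2 \<in> C" "x < c2" using x ne bb by (auto simp: q_def less_cSup_iff)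
    show "x \<in> C" using iv c1 c2 unfolding is_interval_1 by (meson less_imp_le)
  qed
  have clC: "closure C = {p..q}"
  proof
    show "closure C \<subseteq> {p..q}" using Cpq by (metis closed_atLeastAtMost closure_minimal)
    have "closure {p<..<q} \<subseteq> closure C" using open_sub by (rule closure_mono)
    then show "{p..q} \<subseteq> closure C" using pq by simp
  qed
  have contpq: "continuous_on {p..q} f" using p0 q1 by (intro continuous_on_subset[OF cont]) auto
  have "f ` closure C \<subseteq> {d..e}" by (rule image_closure_subset) (use clC contpq fC in auto)
  then have "f ` {p..q} \<subseteq> {d..e}" using clC by simp
  moreover have "{d..e} \<subseteq> f ` {p..q}"
  proof -
    have "closed (f ` {p..q})" using contpq by (intro compact_imp_closed compact_continuous_image) auto
    moreover have "{d<..<e} \<subseteq> f ` {p..q}" using fC Cpq by auto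
    ultimately have "closure {d<..<e} \<subseteq> f ` {p..q}" by (rule closure_minimal[rotated])
    then show ?thesis using de by simp
  qed
  ultimately have "f ` {p..q} = {d..e}" by auto
  then show ?thesis using p0 q1 pq open_sub Cpq p_def q_def by blast
qed

lemma Two:
  fixes f :: "real \<Rightarrow> real"
  assumes cont: "continuous_on {0..1} f" and de: "d < e"
    and C1: "C1 \<in> components {x \<in> {0..1}. f x \<in> {d<..<e}}" "f ` C1 = {d<..<e}"
    and C2: "C2 \<in> components {x \<in> {0..1}. f x \<in> {d<..<e}}" "f ` C2 = {d<..<e}"
    and ne: "C1 \<noteq> C2" and sub: "C1 \<subseteq> {d..e}"
  shows "admits_splitting_seq f"
proof -
  obtain p1 q1 where P1: "0 \<le> p1" "p1 < q1" "q1 \<le> 1" "{p1<..<q1} \<subseteq> C1" "C1 \<subseteq> {p1..q1}"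
    "f ` {p1..q1} = {d..e}" "p1 = Inf C1" "q1 = Sup C1"
    using Comp[OF cont C1 de] by blast
  obtain p2 q2 where P2: "0 \<le> p2" "p2 < q2" "q2 \<le> 1" "{p2<..<q2} \<subseteq> C2" "C2 \<subseteq> {p2..q2}"
    "f ` {p2..q2} = {d..e}"
    using Comp[OF cont C2 de] by blast
  have disj: "C1 \<inter> C2 = {}" using components_nonoverlap[OF C1(1) C2(1)] ne by blast
  have dis: "q1 \<le> p2 \<or> q2 \<le> p1"
  proof (rule ccontr)
    assume "\<not> (q1 \<le> p2 \<or> q2 \<le> p1)"
    then have "(max p1 p2 + min q1 q2)/2 \<in> {p1<..<q1} \<inter> {p2<..<q2}" using P1 P2 by auto
    then show False using P1(4) P2(4) disj by blast
  qed
  have ne1: "C1 \<noteq> {}" using in_components_nonempty[OF C1(1)] .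
  have bb: "bdd_below C1" "bdd_above C1" using P1(5) by (meson bdd_below_Icc bdd_below_mono bdd_above_Icc bdd_above_mono)+
  have "d \<le> p1" unfolding P1(7) using ne1 sub by (intro cInf_greatest) auto
  moreover have "q1 \<le> e" unfolding P1(8) using ne1 sub by (intro cSup_least) auto
  ultimately have "{p1..q1} \<subseteq> {d..e}" by auto
  then show ?thesis using Split[OF cont P1(1-3) P2(1-3) dis P1(6) P2(6)] by blast
qed

theorem lemma3p11:
  fixes f :: "real \<Rightarrow> real" and d e :: real
  assumes "continuous_on {0..1} f"
    and "f ` {0..1} \<subseteq> {0..1}"
    and "\<not> admits_splitting_seq f"
    and "0 \<le> d" "d < e" "e \<le> 1"
    and "(f d = d \<and> f e = e) \<or> two_cycle f d e"
  shows "\<exists>!C. C \<in> components {x \<in> {0..1}. f x \<in> {d<..<e}} \<and> f ` C = {d<..<e}"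
proof -
  note cont = assms(1) and de = assms(5)
  define U where "U = {x \<in> {0..1}. f x \<in> {d<..<e}}"
  have fde: "f d \<in> {d, e}" "f e \<in> {d, e}" using assms(7) unfolding two_cycle_def by auto
  have dU: "d \<notin> U" "e \<notin> U" using fde unfolding U_def by auto
  have contde: "continuous_on {d..e} f" using assms(4,6) by (intro continuous_on_subset[OF cont]) auto
  have "{d..e} \<subseteq> f ` {d..e}"
  proof
    fix v assume v: "v \<in> {d..e}"
    have "\<exists>x. d \<le> x \<and> x \<le> e \<and> f x = v"
    proof (cases "f d = d")
      case True
      then have "f e = e" using assms(7) unfolding two_cycle_def by auto
      then show ?thesis using IVT'[of f d v e, OF _ _ _ contde] True v by auto
    next
      case False
      then have "f d = e" "f e = d" using assms(7) unfolding two_cycle_def by auto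
      then show ?thesis using IVT2'[of f e v d, OF _ _ _ contde] v by auto
    qed
    then show "v \<in> f ` {d..e}" by auto
  qed
  from L1[OF less_imp_le[OF de] contde de this] obtain a b where
    ab: "d \<le> a" "a < b" "b \<le> e" "f ` {a<..<b} = {d<..<e}" by blast
  define m where "m = (a + b) / 2"
  have m: "m \<in> {a<..<b}" using ab by (simp add: m_def)
  have abU: "{a<..<b} \<subseteq> U" using ab assms(4,6) unfolding U_def by auto
  define C0 where "C0 = connected_component_set U m"
  have C0c: "C0 \<in> components U" unfolding C0_def using m abU by (intro componentsI) auto
  have abC0: "{a<..<b} \<subseteq> C0" unfolding C0_def using m abU
    by (intro connected_component_maximal) auto
  have C0U: "C0 \<subseteq> U" unfolding C0_def by (rule connected_component_subset)
  have fC0: "f ` C0 = {d<..<e}" using C0U abC0 ab(4) unfolding U_def by blast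
  have C0sub: "C0 \<subseteq> {d..e}"
  proof
    fix x assume x: "x \<in> C0"
    have iv: "is_interval C0" using in_components_connected[OF C0c] is_interval_connected_1 by blast
    have mC: "m \<in> C0" using m abC0 by auto
    have md: "d < m" "m < e" using m ab by auto
    show "x \<in> {d..e}"
    proof (rule ccontr)
      assume "x \<notin> {d..e}"
      then consider "x < d" | "e < x" by auto
      then show False
      proof cases
        case 1
        then have "d \<in> C0" using iv x mC md unfolding is_interval_1 by (meson less_imp_le)
        then show False using C0U dU by auto
      next
        case 2
        then have "e \<in> C0" using iv x mC md unfolding is_interval_1 by (meson less_imp_le)
        then show False using C0U dU by auto
      qed
    qed
  qed
  show ?thesis unfolding U_def[symmetric]
  proof (rule ex1I[of _ C0])
    show "C0 \<in> components U \<and> f ` C0 = {d<..<e}" using C0c fC0 by auto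
    fix C assume C: "C \<in> components U \<and> f ` C = {d<..<e}"
    show "C = C0"
    proof (rule ccontr)
      assume "C \<noteq> C0"
      then have "admits_splitting_seq f" using Two[OF cont de C0c[unfolded U_def] fC0, of C] C C0sub
        unfolding U_def by auto
      then show False using assms(3) by auto
    qed
  qed
qed

end
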